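(* Let $\epsilon>0$. Then $$\min_{\substack{P_{U|Y}:\,X-Y-U\\ \|P_{X|U=u}-P_X\|_1\le\epsilon\ \forall u\in\mathcal{U}}} H(Y|U)\;=\;\min_{\substack{P_U,\ \{J_u\},\ P_{Y|U=u}\in\mathbb{S}_u\ \forall u\in\mathcal{U},\\ \sum_u P_U(u)P_{Y|U=u}=P_Y,\\ \{J_u\}\text{ satisfies (P1),(P2),(P3)}}} H(Y|U),$$ where on the right $H(Y|U)=\sum_u P_U(u)H(P_{Y|U=u})$, the minimization being over finite alphabets $\mathcal{U}$, distributions $P_U$ on $\mathcal{U}$, vectors $J_u\in\mathbb{R}^{|\mathcal{X}|}$ and vectors $P_{Y|U=u}\in\mathbb{R}^{|\mathcal{Y}|}$.
   Context: Setting: $X,Y$ are random variables on finite alphabets $\mathcal{X},\mathcal{Y}$ with $|\mathcal{X}|<|\mathcal{Y}|$, joint pmf $P_{XY}$, marginal vectors $P_X\in\mathbb{R}^{|\mathcal{X}|},P_Y\in\mathbb{R}^{|\mathcal{Y}|}$ with all entries positive. $P_{X|Y}\in\mathbb{R}^{|\mathcal{X}|\times|\mathcal{Y}|}$ (entries $P_{X|Y}(x|y)$) has full row rank, and the columns are ordered so that $P_{X|Y}=[P_{X|Y_1},P_{X|Y_2}]$ with $P_{X|Y_1}\in\mathbb{R}^{|\mathcal{X}|\times|\mathcal{X}|}$ invertible. Let $P_{X|Y}=U\Sigma V^T$ be a singular value decomposition with $V=[v_1,\dots,v_{|\mathcal{Y}|}]$ and define $M=[v_1,\dots,v_{|\mathcal{X}|}]^T\in\mathbb{R}^{|\mathcal{X}|\times|\mathcal{Y}|}$.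 For $J_u\in\mathbb{R}^{|\mathcal{X}|}$, $\mathbb{S}_u=\{y\in\mathbb{R}^{|\mathcal{Y}|}: My=MP_Y+\epsilon M\begin{bmatrix}P_{X|Y_1}^{-1}J_u\\0\end{bmatrix},\ y\ge0\}$, where the zero block has size $|\mathcal{Y}|-|\mathcal{X}|$. Properties of $\{J_u\}_{u\in\mathcal{U}}$: (P1) $\sum_x J_u(x)=0$ for all $u$; (P2) $\sum_u P_U(u)J_u(x)=0$ for all $x$; (P3) $\sum_x|J_u(x)|\le1$ for all $u$. On the left, $U$ takes values in a finite alphabet $\mathcal{U}$ and $P_{XYU}=P_{XY}P_{U|Y}$; $\|\cdot\|_1$ is the $\ell_1$ norm. *)

theory Defs
  imports Complex_Main "Jordan_Normal_Form.Gauss_Jordan_Elimination"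
begin

text \<open>Alphabets: X = {0..<nx}, Y = {0..<ny} (nx = dim_row P, ny = dim_col P),
  U = {0..<k}. The joint pmf P_XY is the nx x ny matrix P.\<close>

definition PX :: "real mat \<Rightarrow> real vec" where
  "PX P = vec (dim_row P) (\<lambda>x. \<Sum>y<dim_col P. P $$ (x, y))"

definition PY :: "real mat \<Rightarrow> real vec" where
  "PY P = vec (dim_col P) (\<lambda>y. \<Sum>x<dim_row P. P $$ (x, y))"

definition PXgY :: "real mat \<Rightarrow> real mat" where
  "PXgY P = mat (dim_row P) (dim_col P) (\<lambda>(x, y). P $$ (x, y) / PY P $ y)"

definition PXgY1 :: "real mat \<Rightarrow> real mat" where
  "PXgY1 P = mat (dim_row P) (dim_row P) (\<lambda>(x, y). PXgY P $$ (x, y))"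

definition is_svd :: "real mat \<Rightarrow> real mat \<Rightarrow> real mat \<Rightarrow> real mat \<Rightarrow> bool" where
  "is_svd A U S V \<longleftrightarrow>
     U \<in> carrier_mat (dim_row A) (dim_row A) \<and> V \<in> carrier_mat (dim_col A) (dim_col A) \<and>
     S \<in> carrier_mat (dim_row A) (dim_col A) \<and>
     transpose_mat U * U = 1\<^sub>m (dim_row A) \<and> transpose_mat V * V = 1\<^sub>m (dim_col A) \<and>
     (\<forall>i<dim_row A. \<forall>j<dim_col A. i \<noteq> j \<longrightarrow> S $$ (i, j) = 0) \<and>
     (\<forall>i<min (dim_row A) (dim_col A). S $$ (i, i) \<ge> 0) \<and>
     A = U * S * transpose_mat V"

definition entropy :: "real vec \<Rightarrow> real" where
  "entropy p = - (\<Sum>i<dim_vec p. if p $ i > 0 then p $ i * log 2 (p $ i) else 0)"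

definition l1norm :: "real vec \<Rightarrow> real" where
  "l1norm v = (\<Sum>i<dim_vec v. \<bar>v $ i\<bar>)"

definition S_set :: "real mat \<Rightarrow> real mat \<Rightarrow> real \<Rightarrow> real vec \<Rightarrow> real vec set" where
  "S_set P M \<epsilon> J = {y \<in> carrier_vec (dim_col P).
      M *\<^sub>v y = M *\<^sub>v PY P + \<epsilon> \<cdot>\<^sub>v (M *\<^sub>v ((the (mat_inverse (PXgY1 P)) *\<^sub>v J)
                                 @\<^sub>v 0\<^sub>v (dim_col P - dim_row P)))
      \<and> (\<forall>i<dim_col P. y $ i \<ge> 0)}"

text \<open>Quantities induced by a kernel Q u y = P_{U|Y}(u|y) under X - Y - U\<close>
definition PU_of :: "real mat \<Rightarrow> (nat \<Rightarrow> nat \<Rightarrow> real) \<Rightarrow> nat \<Rightarrow> real" where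
  "PU_of P Q u = (\<Sum>y<dim_col P. PY P $ y * Q u y)"

definition PXgU_of :: "real mat \<Rightarrow> (nat \<Rightarrow> nat \<Rightarrow> real) \<Rightarrow> nat \<Rightarrow> real vec" where
  "PXgU_of P Q u = vec (dim_row P) (\<lambda>x. (\<Sum>y<dim_col P. P $$ (x, y) * Q u y) / PU_of P Q u)"

definition PYgU_of :: "real mat \<Rightarrow> (nat \<Rightarrow> nat \<Rightarrow> real) \<Rightarrow> nat \<Rightarrow> real vec" where
  "PYgU_of P Q u = vec (dim_col P) (\<lambda>y. PY P $ y * Q u y / PU_of P Q u)"

definition left_values :: "real mat \<Rightarrow> real \<Rightarrow> real set" where
  "left_values P \<epsilon> = {H. \<exists>(k::nat) (Q :: nat \<Rightarrow> nat \<Rightarrow> real).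
      (\<forall>u<k. \<forall>y<dim_col P. Q u y \<ge> 0) \<and>
      (\<forall>y<dim_col P. (\<Sum>u<k. Q u y) = 1) \<and>
      (\<forall>u<k. PU_of P Q u > 0 \<longrightarrow> l1norm (PXgU_of P Q u - PX P) \<le> \<epsilon>) \<and>
      H = (\<Sum>u<k. PU_of P Q u * entropy (PYgU_of P Q u))}"

definition right_values :: "real mat \<Rightarrow> real mat \<Rightarrow> real \<Rightarrow> real set" where
  "right_values P M \<epsilon> = {H. \<exists>(k::nat) (PU :: nat \<Rightarrow> real) (J :: nat \<Rightarrow> real vec) (Pyu :: nat \<Rightarrow> real vec).
      (\<forall>u<k. PU u \<ge> 0) \<and> (\<Sum>u<k. PU u) = 1 \<and>
      (\<forall>u<k. J u \<in> carrier_vec (dim_row P) \<and> Pyu u \<in> S_set P M \<epsilon> (J u)) \<and>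
      (\<forall>y<dim_col P. (\<Sum>u<k. PU u * Pyu u $ y) = PY P $ y) \<and>
      (\<forall>u<k. (\<Sum>x<dim_row P. J u $ x) = 0) \<and>
      (\<forall>x<dim_row P. (\<Sum>u<k. PU u * J u $ x) = 0) \<and>
      (\<forall>u<k. (\<Sum>x<dim_row P. \<bar>J u $ x\<bar>) \<le> 1) \<and>
      H = (\<Sum>u<k. PU u * entropy (Pyu u))}"

definition is_min_of :: "real set \<Rightarrow> real \<Rightarrow> bool" where
  "is_min_of A v \<longleftrightarrow> v \<in> A \<and> (\<forall>w\<in>A. v \<le> w)"

end

theory Submission
  imports Defs "HOL-Analysis.Elementary_Metric_Spaces" "Jordan_Normal_Form.Determinant"
begin

lemma mv_sum: "A \<in> carrier_mat r c \<Longrightarrow> v \<in> carrier_vec c \<Longrightarrow> i < r \<Longrightarrow>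
  (A *\<^sub>v v) $ i = (\<Sum>j<c. A $$ (i,j) * v $ j)"
  by (auto simp: scalar_prod_def lessThan_atLeast0 intro!: sum.cong)

definition ent :: "real \<Rightarrow> real" where
  "ent x = (if x > 0 then x * log 2 x else 0)"

lemma entropy_ent: "entropy p = - (\<Sum>i<dim_vec p. ent (p $ i))"
  unfolding entropy_def ent_def by simp

definition feas :: "real mat \<Rightarrow> real \<Rightarrow> real vec \<Rightarrow> bool" where
  "feas P \<epsilon> p \<longleftrightarrow> p \<in> carrier_vec (dim_col P) \<and> (\<forall>i<dim_col P. p $ i \<ge> 0) \<and>
     (\<Sum>i<dim_col P. p $ i) = 1 \<and> l1norm (PXgY P *\<^sub>v p - PX P) \<le> \<epsilon>"

definition core_values :: "real mat \<Rightarrow> real \<Rightarrow> real set" where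
  "core_values P \<epsilon> = {H. \<exists>(k::nat) (lam :: nat \<Rightarrow> real) (p :: nat \<Rightarrow> real vec).
      (\<forall>u<k. lam u \<ge> 0) \<and> (\<Sum>u<k. lam u) = 1 \<and> (\<forall>u<k. feas P \<epsilon> (p u)) \<and>
      (\<forall>y<dim_col P. (\<Sum>u<k. lam u * p u $ y) = PY P $ y) \<and>
      H = (\<Sum>u<k. lam u * entropy (p u))}"

lemma mv_zero[simp]: "A \<in> carrier_mat r c \<Longrightarrow> A *\<^sub>v 0\<^sub>v c = 0\<^sub>v r"
  by (intro eq_vecI) (auto simp: scalar_prod_def)

lemma vec_minus_0: fixes a b :: "'a::ab_group_add vec" shows "a \<in> carrier_vec n \<Longrightarrow> b \<in> carrier_vec n \<Longrightarrow> (a - b = 0\<^sub>v n) = (a = b)"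
proof
  assume a: "a \<in> carrier_vec n" and b: "b \<in> carrier_vec n" and e: "a - b = 0\<^sub>v n"
  show "a = b"
  proof (rule eq_vecI)
    fix i assume "i < dim_vec b"
    then have "(a - b) $ i = 0" using e b by simp
    then show "a $ i = b $ i" using a b \<open>i < dim_vec b\<close> by simp
  qed (use a b in simp)
qed auto

lemma kernel_exists:
  fixes q :: "nat \<Rightarrow> nat \<Rightarrow> real"
  assumes nk: "n < k"
  shows "\<exists>c. (\<exists>u<k. c u \<noteq> 0) \<and> (\<forall>y<n. (\<Sum>u<k. c u * q u y) = 0)"
proof -
  define r where "r i = vec k (\<lambda>u. q u i)" for i
  define B where "B = mat\<^sub>r k k (\<lambda>i. if i = n then 0\<^sub>v k else r i)"
  have Bc: "B \<in> carrier_mat k k" by (simp add: B_def)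
  have "det B = 0" unfolding B_def by (rule det_row_0[OF nk]) (auto simp: r_def)
  then obtain v where v: "v \<in> carrier_vec k" "v \<noteq> 0\<^sub>v k" "B *\<^sub>v v = 0\<^sub>v k"
    using det_0_iff_vec_prod_zero_field[OF Bc] by auto
  have "\<exists>u<k. v $ u \<noteq> 0"
  proof (rule ccontr)
    assume "\<not> (\<exists>u<k. v $ u \<noteq> 0)"
    then have "v = 0\<^sub>v k" using v(1) by (intro eq_vecI) auto
    then show False using v(2) by simp
  qed
  moreover have "(\<Sum>u<k. v $ u * q u y) = 0" if y: "y < n" for y
  proof -
    have "(B *\<^sub>v v) $ y = (\<Sum>u<k. B $$ (y,u) * v $ u)" using y nk by (intro mv_sum[OF Bc v(1)]) auto
    also have "\<dots> = (\<Sum>u<k. v $ u * q u y)"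
      using y nk by (intro sum.cong) (auto simp: B_def r_def)
    finally show ?thesis using v(3) y nk by simp
  qed
  ultimately show ?thesis by (intro exI[of _ "\<lambda>u. v $ u"]) auto
qed

lemma reduce_step:
  fixes q :: "nat \<Rightarrow> nat \<Rightarrow> real" and h lam :: "nat \<Rightarrow> real"
  assumes nk: "n < k" and lam0: "\<forall>u<k. lam u \<ge> 0" and sum1: "(\<Sum>u<k. lam u) = 1"
    and qs: "\<forall>u<k. (\<Sum>y<n. q u y) = 1"
  shows "\<exists>lam'. (\<forall>u<k. lam' u \<ge> 0) \<and> (\<Sum>u<k. lam' u) = 1 \<and>
     (\<forall>y<n. (\<Sum>u<k. lam' u * q u y) = (\<Sum>u<k. lam u * q u y)) \<and>
     (\<Sum>u<k. lam' u * h u) \<le> (\<Sum>u<k. lam u * h u) \<and> (\<exists>u0<k. lam' u0 = 0)"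
proof -
  obtain c0 where c0nz: "\<exists>u<k. c0 u \<noteq> 0" and c0q: "\<forall>y<n. (\<Sum>u<k. c0 u * q u y) = 0"
    using kernel_exists[OF nk] by blast
  define sg :: real where "sg = (if (\<Sum>u<k. c0 u * h u) \<ge> 0 then 1 else -1)"
  define c where "c u = sg * c0 u" for u
  have sgnz: "sg \<noteq> 0" by (simp add: sg_def)
  have cnz: "\<exists>u<k. c u \<noteq> 0" using c0nz sgnz by (auto simp: c_def)
  have cq: "\<forall>y<n. (\<Sum>u<k. c u * q u y) = 0"
    using c0q by (simp add: c_def mult.assoc sum_distrib_left[symmetric])
  have "(\<Sum>u<k. c u * h u) = sg * (\<Sum>u<k. c0 u * h u)"
    by (simp add: c_def mult.assoc sum_distrib_left)
  then have ch: "(\<Sum>u<k. c u * h u) \<ge> 0"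
    by (auto simp: sg_def)
  have csum: "(\<Sum>u<k. c u) = 0"
  proof -
    have "(\<Sum>u<k. c u) = (\<Sum>u<k. c u * (\<Sum>y<n. q u y))" using qs by simp
    also have "\<dots> = (\<Sum>y<n. \<Sum>u<k. c u * q u y)"
      by (simp add: sum_distrib_left sum.swap[of _ "{..<k}"])
    also have "\<dots> = 0" using cq by simp
    finally show ?thesis .
  qed
  have "\<exists>u<k. c u > 0"
  proof (rule ccontr)
    assume "\<not> (\<exists>u<k. c u > 0)"
    then have le: "\<forall>u\<in>{..<k}. c u \<le> 0" by auto
    then have "\<forall>u\<in>{..<k}. - c u = 0"
      using sum_nonneg_eq_0_iff[of "{..<k}" "\<lambda>u. - c u"] csum by (simp add: sum_negf)
    then show False using cnz by auto
  qed
  define Sp where "Sp = {u. u < k \<and> c u > 0}"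
  have Spf: "finite Sp" and Spne: "Sp \<noteq> {}" using \<open>\<exists>u<k. c u > 0\<close> by (auto simp: Sp_def)
  define t where "t = Min ((\<lambda>u. lam u / c u) ` Sp)"
  have "t \<in> (\<lambda>u. lam u / c u) ` Sp" unfolding t_def using Spf Spne by (intro Min_in) auto
  then obtain u0 where u0: "u0 \<in> Sp" "t = lam u0 / c u0" by auto
  have tle: "t \<le> lam u / c u" if "u \<in> Sp" for u
    unfolding t_def using Spf that by (intro Min_le) auto
  have t0: "t \<ge> 0" using u0 lam0 by (auto simp: Sp_def)
  define lam' where "lam' u = lam u - t * c u" for u
  have l0: "\<forall>u<k. lam' u \<ge> 0"
  proof (intro allI impI)
    fix u assume u: "u < k"
    show "lam' u \<ge> 0"
    proof (cases "c u > 0")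
      case True
      then have "t \<le> lam u / c u" using tle u by (auto simp: Sp_def)
      then have "t * c u \<le> lam u" using True by (simp add: le_divide_eq)
      then show ?thesis by (simp add: lam'_def)
    next
      case False
      then have "t * c u \<le> 0" using t0 by (simp add: mult_nonneg_nonpos)
      moreover have "lam u \<ge> 0" using lam0 u by simp
      ultimately show ?thesis by (simp add: lam'_def)
    qed
  qed
  have s1: "(\<Sum>u<k. lam' u) = 1"
    using sum1 csum by (simp add: lam'_def sum_subtractf sum_distrib_left[symmetric])
  have mq: "\<forall>y<n. (\<Sum>u<k. lam' u * q u y) = (\<Sum>u<k. lam u * q u y)"
  proof (intro allI impI)
    fix y assume y: "y < n"
    have "(\<Sum>u<k. lam' u * q u y) = (\<Sum>u<k. lam u * q u y) - t * (\<Sum>u<k. c u * q u y)"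
      by (simp add: lam'_def left_diff_distrib sum_subtractf sum_distrib_left mult.assoc)
    then show "(\<Sum>u<k. lam' u * q u y) = (\<Sum>u<k. lam u * q u y)" using cq y by simp
  qed
  have hv: "(\<Sum>u<k. lam' u * h u) \<le> (\<Sum>u<k. lam u * h u)"
  proof -
    have "(\<Sum>u<k. lam' u * h u) = (\<Sum>u<k. lam u * h u) - t * (\<Sum>u<k. c u * h u)"
      by (simp add: lam'_def left_diff_distrib sum_subtractf sum_distrib_left mult.assoc)
    then show ?thesis using ch t0 by (simp add: mult_nonneg_nonneg)
  qed
  have z: "lam' u0 = 0" using u0 by (auto simp: lam'_def Sp_def)
  have "u0 < k" using u0 by (simp add: Sp_def)
  then show ?thesis using l0 s1 mq hv z by blast
qed

definition sw :: "nat \<Rightarrow> nat \<Rightarrow> nat \<Rightarrow> nat" where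
  "sw a b u = (if u = a then b else if u = b then a else u)"

lemma drop_sum:
  fixes F :: "nat \<Rightarrow> real"
  assumes u0: "u0 < k" and F0: "F u0 = 0"
  shows "(\<Sum>u<k - 1. F (sw u0 (k - 1) u)) = (\<Sum>u<k. F u)"
proof -
  have "(\<Sum>u<k. F (sw u0 (k - 1) u)) = (\<Sum>u<k. F u)"
    by (rule sum.reindex_bij_witness[of _ "sw u0 (k - 1)" "sw u0 (k - 1)"]) (use u0 in \<open>auto simp: sw_def\<close>)
  moreover have "(\<Sum>u<k. F (sw u0 (k - 1) u)) = (\<Sum>u<k - 1. F (sw u0 (k - 1) u)) + F (sw u0 (k - 1) (k - 1))"
    using u0 by (metis Suc_pred' gr_implies_not0 lessThan_Suc sum.lessThan_Suc not_gr_zero)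
  moreover have "F (sw u0 (k - 1) (k - 1)) = 0" using F0 by (simp add: sw_def)
  ultimately show ?thesis by simp
qed

lemma sw_less: "u0 < k \<Longrightarrow> u < k - 1 \<Longrightarrow> sw u0 (k - 1) u < k"
  by (auto simp: sw_def)

lemma ent_bound: fixes y :: real assumes y0: "0 < y" and y1: "y < 1"
  shows "\<bar>ent y\<bar> \<le> 2 / ln 2 * sqrt y"
proof -
  have s: "sqrt y > 0" using y0 by simp
  have l: "- ln y \<le> 2 / sqrt y"
  proof -
    have "ln (inverse (sqrt y)) \<le> inverse (sqrt y) - 1" using s by (intro ln_le_minus_one) simp
    moreover have "ln (inverse (sqrt y)) = - ln y / 2" using s y0 by (simp add: ln_inverse ln_sqrt)
    ultimately have "- ln y / 2 \<le> inverse (sqrt y)" by simp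
    then show ?thesis using s by (simp add: field_simps)
  qed
  have ln0: "ln y < 0" using y0 y1 by simp
  have e: "ent y = y * ln y / ln 2" unfolding ent_def log_def using y0 by simp
  have "y * (- ln y) \<le> y * (2 / sqrt y)" using l y0 by (intro mult_left_mono) auto
  also have "y * (2 / sqrt y) = 2 * (y / sqrt y)" by simp
  also have "\<dots> = 2 * sqrt y" using y0 by (simp add: real_div_sqrt)
  finally have c: "y * (- ln y) \<le> 2 * sqrt y" .
  have "y * (- ln y) / ln 2 \<le> 2 * sqrt y / ln 2" by (rule divide_right_mono[OF c]) simp
  moreover have "\<bar>ent y\<bar> = y * (- ln y) / ln 2" unfolding e using y0 ln0
    by (simp add: abs_mult abs_div mult_nonneg_nonpos abs_of_neg)
  ultimately show ?thesis by simp
qed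

lemma isCont_ent: "isCont ent x"
proof (cases "x > 0")
  case True
  have ev: "eventually (\<lambda>y. ent y = y * log 2 y) (nhds x)"
  proof -
    have "eventually (\<lambda>y. y \<in> {0<..}) (nhds x)" using True by (intro eventually_nhds_in_open) auto
    then show ?thesis by eventually_elim (simp add: ent_def)
  qed
  have "isCont (\<lambda>y. y * log 2 y) x" using True by (intro continuous_intros) auto
  then show ?thesis using isCont_cong[OF ev] by simp
next
  case False
  show ?thesis
  proof (cases "x < 0")
    case True
    have ev: "eventually (\<lambda>y. ent y = 0) (nhds x)"
    proof -
      have "eventually (\<lambda>y. y \<in> {..<0}) (nhds x)" using True by (intro eventually_nhds_in_open) auto
      then show ?thesis by eventually_elim (simp add: ent_def)
    qed
    then show ?thesis using isCont_cong[OF ev] by simp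
  next
    case False
    then have x0: "x = 0" using \<open>\<not> x > 0\<close> by simp
    define g where "g y = 2 / ln 2 * sqrt \<bar>y\<bar>" for y :: real
    have g0: "(g \<longlongrightarrow> 0) (at 0)"
    proof -
      have "(g \<longlongrightarrow> g 0) (at 0)" unfolding g_def by (intro tendsto_intros)
      then show ?thesis by (simp add: g_def)
    qed
    have evb: "eventually (\<lambda>y. \<bar>ent y\<bar> \<le> g y) (at 0)"
      unfolding eventually_at
    proof (intro exI[of _ 1] conjI ballI impI)
      fix y :: real assume "y \<noteq> 0 \<and> dist y 0 < 1"
      then have y1: "\<bar>y\<bar> < 1" by simp
      show "\<bar>ent y\<bar> \<le> g y"
      proof (cases "y > 0")
        case True then show ?thesis using ent_bound[OF True] y1 by (simp add: g_def)
      next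
        case False then show ?thesis by (simp add: ent_def g_def)
      qed
    qed simp
    have "(ent \<longlongrightarrow> 0) (at 0)"
    proof (rule tendsto_sandwich[where f="\<lambda>y. - g y" and h=g])
      show "eventually (\<lambda>y. - g y \<le> ent y) (at 0)" using evb by eventually_elim auto
      show "eventually (\<lambda>y. ent y \<le> g y) (at 0)" using evb by eventually_elim auto
      show "((\<lambda>y. - g y) \<longlongrightarrow> 0) (at 0)" using tendsto_minus[OF g0] by simp
      show "(g \<longlongrightarrow> 0) (at 0)" by (rule g0)
    qed
    then show ?thesis unfolding isCont_def x0 by (simp add: ent_def)
  qed
qed

definition conf :: "real mat \<Rightarrow> real \<Rightarrow> nat \<Rightarrow> (nat \<Rightarrow> real) \<Rightarrow> (nat \<Rightarrow> real vec) \<Rightarrow> bool" where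
  "conf P \<epsilon> k lam p \<longleftrightarrow> (\<forall>u<k. lam u \<ge> 0) \<and> (\<Sum>u<k. lam u) = 1 \<and> (\<forall>u<k. feas P \<epsilon> (p u)) \<and>
      (\<forall>y<dim_col P. (\<Sum>u<k. lam u * p u $ y) = PY P $ y)"

definition val :: "nat \<Rightarrow> (nat \<Rightarrow> real) \<Rightarrow> (nat \<Rightarrow> real vec) \<Rightarrow> real" where
  "val k lam p = (\<Sum>u<k. lam u * entropy (p u))"

lemma core_iff: "H \<in> core_values P \<epsilon> \<longleftrightarrow> (\<exists>k lam p. conf P \<epsilon> k lam p \<and> H = val k lam p)"
  unfolding core_values_def conf_def val_def by blast

lemma sum_if_less: fixes k n :: nat and F :: "nat \<Rightarrow> 'a::comm_monoid_add" shows "k \<le> n \<Longrightarrow> (\<Sum>u<n. if u < k then F u else 0) = (\<Sum>u<k. F u)"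
proof -
  assume kn: "k \<le> n"
  have "(\<Sum>u<n. if u < k then F u else 0) = sum F {u \<in> {..<n}. u < k}"
    by (rule sum.inter_filter[symmetric]) simp
  also have "{u \<in> {..<n}. u < k} = {..<k}" using kn by auto
  finally show ?thesis .
qed

locale setting =
  fixes P :: "real mat" and nx ny :: nat and \<epsilon> :: real
  assumes carr: "P \<in> carrier_mat nx ny" and nxny: "nx < ny"
    and nonneg: "\<forall>x<nx. \<forall>y<ny. P $$ (x, y) \<ge> 0"
    and tot: "(\<Sum>x<nx. \<Sum>y<ny. P $$ (x, y)) = 1"
    and PYpos: "\<forall>y<ny. PY P $ y > 0"
    and eps: "\<epsilon> > 0"
begin

lemma dr[simp]: "dim_row P = nx" and dc[simp]: "dim_col P = ny" using carr by auto

lemma PY_idx: "y < ny \<Longrightarrow> PY P $ y = (\<Sum>x<nx. P $$ (x,y))"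
  by (simp add: PY_def)
lemma PX_idx[simp]: "x < nx \<Longrightarrow> PX P $ x = (\<Sum>y<ny. P $$ (x,y))"
  by (simp add: PX_def)
lemma PY_carr[simp]: "PY P \<in> carrier_vec ny" by (simp add: PY_def)
lemma dim_PY[simp]: "dim_vec (PY P) = ny" by (simp add: PY_def)
lemma dim_PX[simp]: "dim_vec (PX P) = nx" by (simp add: PX_def)
lemma PX_carr[simp]: "PX P \<in> carrier_vec nx" by (simp add: PX_def)
lemma A_carr[simp]: "PXgY P \<in> carrier_mat nx ny" by (simp add: PXgY_def)
lemma A_dims[simp]: "dim_row (PXgY P) = nx" "dim_col (PXgY P) = ny" by (simp_all add: PXgY_def)
lemma A_idx[simp]: "x < nx \<Longrightarrow> y < ny \<Longrightarrow> PXgY P $$ (x,y) = P $$ (x,y) / PY P $ y"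
  by (simp add: PXgY_def)

lemma PYpos': "y < ny \<Longrightarrow> PY P $ y > 0" using PYpos by auto
lemma PYnz[simp]: "y < ny \<Longrightarrow> PY P $ y \<noteq> 0" using PYpos by force

lemma colsum: "y < ny \<Longrightarrow> (\<Sum>x<nx. PXgY P $$ (x,y)) = 1"
proof -
  assume y: "y < ny"
  have "(\<Sum>x<nx. PXgY P $$ (x,y)) = (\<Sum>x<nx. P $$ (x,y)) / PY P $ y"
    using y by (simp add: sum_divide_distrib)
  also have "\<dots> = 1" using PYpos'[OF y] y by (simp add: PY_idx)
  finally show ?thesis .
qed

lemma sum_PY: "(\<Sum>y<ny. PY P $ y) = 1"
  using tot by (simp add: PY_idx sum.swap[of _ "{..<nx}"])
lemma sum_PX: "(\<Sum>x<nx. PX P $ x) = 1"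
  using tot by simp

lemma A_PY: "PXgY P *\<^sub>v PY P = PX P"
proof (rule eq_vecI)
  fix x assume "x < dim_vec (PX P)"
  then have x: "x < nx" by simp
  have "(PXgY P *\<^sub>v PY P) $ x = (\<Sum>y<ny. P $$ (x,y) / PY P $ y * PY P $ y)"
    using x by (simp add: mv_sum[OF A_carr PY_carr x])
  also have "\<dots> = (\<Sum>y<ny. P $$ (x,y))"
    by (rule sum.cong) auto
  finally show "(PXgY P *\<^sub>v PY P) $ x = PX P $ x" using x by simp
qed simp

lemma sum_Av: "p \<in> carrier_vec ny \<Longrightarrow> (\<Sum>x<nx. (PXgY P *\<^sub>v p) $ x) = (\<Sum>y<ny. p $ y)"
proof -
  assume p: "p \<in> carrier_vec ny"
  have "(\<Sum>x<nx. (PXgY P *\<^sub>v p) $ x) = (\<Sum>x<nx. \<Sum>y<ny. PXgY P $$ (x,y) * p $ y)"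
    by (rule sum.cong) (auto simp: mv_sum[OF A_carr p] simp del: A_idx index_mult_mat_vec)
  also have "\<dots> = (\<Sum>y<ny. (\<Sum>x<nx. PXgY P $$ (x,y)) * p $ y)"
    by (simp add: sum.swap[of _ "{..<nx}"] sum_distrib_right)
  also have "\<dots> = (\<Sum>y<ny. p $ y)" using colsum by simp
  finally show ?thesis .
qed

lemma feas_PY: "feas P \<epsilon> (PY P)"
  unfolding feas_def using sum_PY PYpos' A_PY eps by (auto simp: l1norm_def less_imp_le)

lemma reduce: "conf P \<epsilon> k lam p \<Longrightarrow> \<exists>lam' p'. conf P \<epsilon> ny lam' p' \<and> val ny lam' p' \<le> val k lam p"
proof (induction k arbitrary: lam p rule: less_induct)
  case (less k)
  have c: "\<forall>u<k. lam u \<ge> 0" "(\<Sum>u<k. lam u) = 1" "\<forall>u<k. feas P \<epsilon> (p u)"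
    "\<forall>y<ny. (\<Sum>u<k. lam u * p u $ y) = PY P $ y"
    using less.prems unfolding conf_def by auto
  show ?case
  proof (cases "k \<le> ny")
    case True
    define lam' where "lam' u = (if u < k then lam u else 0)" for u
    define p' where "p' u = (if u < k then p u else PY P)" for u
    have "conf P \<epsilon> ny lam' p'"
      unfolding conf_def dc
    proof (intro conjI allI impI)
      show "lam' u \<ge> 0" if "u < ny" for u using c by (auto simp: lam'_def)
      show "(\<Sum>u<ny. lam' u) = 1" unfolding lam'_def using sum_if_less[OF True, of lam] c by simp
      show "feas P \<epsilon> (p' u)" if "u < ny" for u using c feas_PY by (auto simp: p'_def)
      show "(\<Sum>u<ny. lam' u * p' u $ y) = PY P $ y" if y: "y < ny" for y
      proof -
        have "(\<Sum>u<ny. lam' u * p' u $ y) = (\<Sum>u<ny. if u < k then lam u * p u $ y else 0)"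
          by (rule sum.cong) (auto simp: lam'_def p'_def)
        also have "\<dots> = PY P $ y" using sum_if_less[OF True, of "\<lambda>u. lam u * p u $ y"] c y by simp
        finally show ?thesis .
      qed
    qed
    moreover have "val ny lam' p' = val k lam p"
    proof -
      have "val ny lam' p' = (\<Sum>u<ny. if u < k then lam u * entropy (p u) else 0)"
        unfolding val_def by (rule sum.cong) (auto simp: lam'_def p'_def)
      also have "\<dots> = val k lam p" unfolding val_def by (rule sum_if_less[OF True])
      finally show ?thesis .
    qed
    ultimately show ?thesis by (intro exI[of _ lam'] exI[of _ p']) simp
  next
    case False
    then have nk: "ny < k" by simp
    have qs: "\<forall>u<k. (\<Sum>y<ny. p u $ y) = 1" using c(3) by (auto simp: feas_def)
    note rs = reduce_step[where q="\<lambda>u y. p u $ y" and h="\<lambda>u. entropy (p u)", OF nk c(1) c(2) qs]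
    then obtain lam1 where l1a: "(\<forall>u<k. lam1 u \<ge> 0) \<and> (\<Sum>u<k. lam1 u) = 1 \<and>
      (\<forall>y<ny. (\<Sum>u<k. lam1 u * p u $ y) = (\<Sum>u<k. lam u * p u $ y)) \<and>
      (\<Sum>u<k. lam1 u * entropy (p u)) \<le> (\<Sum>u<k. lam u * entropy (p u)) \<and> (\<exists>u0<k. lam1 u0 = 0)" ..
    then obtain u0 where u0: "u0 < k" "lam1 u0 = 0" by blast
    have l1: "\<forall>u<k. lam1 u \<ge> 0" "(\<Sum>u<k. lam1 u) = 1"
      "\<forall>y<ny. (\<Sum>u<k. lam1 u * p u $ y) = (\<Sum>u<k. lam u * p u $ y)"
      "(\<Sum>u<k. lam1 u * entropy (p u)) \<le> (\<Sum>u<k. lam u * entropy (p u))"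
      using l1a by blast+
    define lam2 where "lam2 u = lam1 (sw u0 (k - 1) u)" for u
    define p2 where "p2 u = p (sw u0 (k - 1) u)" for u
    have "conf P \<epsilon> (k - 1) lam2 p2"
      unfolding conf_def dc
    proof (intro conjI allI impI)
      show "lam2 u \<ge> 0" if "u < k - 1" for u using l1(1) sw_less[OF u0(1) that] by (simp add: lam2_def)
      show "(\<Sum>u<k - 1. lam2 u) = 1" unfolding lam2_def using drop_sum[OF u0(1), of lam1] u0(2) l1(2) by simp
      show "feas P \<epsilon> (p2 u)" if "u < k - 1" for u using c(3) sw_less[OF u0(1) that] by (simp add: p2_def)
      show "(\<Sum>u<k - 1. lam2 u * p2 u $ y) = PY P $ y" if y: "y < ny" for y
        unfolding lam2_def p2_def using drop_sum[OF u0(1), of "\<lambda>u. lam1 u * p u $ y"] u0(2) l1(3) c(4) y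
        by simp
    qed
    moreover have "val (k - 1) lam2 p2 \<le> val k lam p"
      unfolding val_def lam2_def p2_def using drop_sum[OF u0(1), of "\<lambda>u. lam1 u * entropy (p u)"] u0(2) l1(4)
      by simp
    moreover have "k - 1 < k" using nk by simp
    ultimately obtain lam' p' where "conf P \<epsilon> ny lam' p'" "val ny lam' p' \<le> val (k - 1) lam2 p2"
      using less.IH by blast
    then show ?thesis using \<open>val (k - 1) lam2 p2 \<le> val k lam p\<close> by (intro exI[of _ lam'] exI[of _ p']) simp
  qed
qed

lemma entropy_c: "p \<in> carrier_vec ny \<Longrightarrow> entropy p = - (\<Sum>y<ny. ent (p $ y))"
  by (simp add: entropy_ent)

lemma feas_b: assumes "feas P \<epsilon> p" "y < ny" shows "0 \<le> p $ y" "p $ y \<le> 1"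
proof -
  have nn: "\<forall>i<ny. p $ i \<ge> 0" and s: "(\<Sum>i<ny. p $ i) = 1" using assms(1) by (auto simp: feas_def)
  show "0 \<le> p $ y" using nn assms(2) by auto
  have "p $ y \<le> (\<Sum>i<ny. p $ i)" by (rule member_le_sum) (use nn assms(2) in auto)
  then show "p $ y \<le> 1" using s by simp
qed

lemma conf_b: assumes "conf P \<epsilon> k lam p" "u < k" shows "0 \<le> lam u" "lam u \<le> 1"
proof -
  have nn: "\<forall>i<k. lam i \<ge> 0" and s: "(\<Sum>i<k. lam i) = 1" using assms(1) by (auto simp: conf_def)
  show "0 \<le> lam u" using nn assms(2) by auto
  have "lam u \<le> (\<Sum>i<k. lam i)" by (rule member_le_sum) (use nn assms(2) in auto)
  then show "lam u \<le> 1" using s by simp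
qed

lemma entropy_nonneg: assumes f: "feas P \<epsilon> p" shows "entropy p \<ge> 0"
proof -
  have pc: "p \<in> carrier_vec ny" using f by (simp add: feas_def)
  have "ent (p $ y) \<le> 0" if "y < ny" for y
    using feas_b[OF f that] by (auto simp: ent_def mult_nonneg_nonpos)
  then have "(\<Sum>y<ny. ent (p $ y)) \<le> 0" by (intro sum_nonpos) auto
  then show ?thesis using entropy_c[OF pc] by simp
qed

lemma val_nonneg: "conf P \<epsilon> k lam p \<Longrightarrow> val k lam p \<ge> 0"
  unfolding val_def by (intro sum_nonneg mult_nonneg_nonneg) (auto simp: conf_def entropy_nonneg)

lemma l1A: assumes p: "p \<in> carrier_vec ny"
  shows "l1norm (PXgY P *\<^sub>v p - PX P) = (\<Sum>x<nx. \<bar>(\<Sum>y<ny. PXgY P $$ (x,y) * p $ y) - PX P $ x\<bar>)"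
  unfolding l1norm_def using p
  by (intro sum.cong) (auto simp: mv_sum[OF A_carr p] simp del: index_mult_mat_vec PX_idx A_idx)

lemma core_min: "\<exists>v. is_min_of (core_values P \<epsilon>) v"
proof -
  define C where "C = core_values P \<epsilon>"
  have conf1: "conf P \<epsilon> 1 (\<lambda>_. 1) (\<lambda>_. PY P)"
    unfolding conf_def using feas_PY by simp
  have "val 1 (\<lambda>_. 1) (\<lambda>_. PY P) \<in> C" unfolding C_def core_iff using conf1 by blast
  then have Cne: "C \<noteq> {}" by blast
  have Cb: "bdd_below C" unfolding bdd_below_def
  proof (intro exI[of _ 0] ballI)
    fix x assume "x \<in> C"
    then obtain k lam p where "conf P \<epsilon> k lam p" "x = val k lam p" unfolding C_def core_iff by blast
    then show "0 \<le> x" using val_nonneg by simp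
  qed
  define m where "m = Inf C"
  have mle: "m \<le> w" if "w \<in> C" for w unfolding m_def using cInf_lower[OF that Cb] .
  have ex: "\<forall>n. \<exists>lp. conf P \<epsilon> ny (fst lp) (snd lp) \<and> val ny (fst lp) (snd lp) < m + inverse (real (Suc n))"
  proof
    fix n
    have "Inf C < m + inverse (real (Suc n))" unfolding m_def by simp
    then obtain H where "H \<in> C" "H < m + inverse (real (Suc n))" using cInf_lessD[OF Cne] by blast
    then obtain k lam p where "conf P \<epsilon> k lam p" "H = val k lam p" unfolding C_def core_iff by blast
    then obtain lam' p' where "conf P \<epsilon> ny lam' p'" "val ny lam' p' \<le> H" using reduce by blast
    then show "\<exists>lp. conf P \<epsilon> ny (fst lp) (snd lp) \<and> val ny (fst lp) (snd lp) < m + inverse (real (Suc n))"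
      using \<open>H < m + inverse (real (Suc n))\<close> by (intro exI[of _ "(lam', p')"]) simp
  qed
  obtain X where X: "\<forall>n. conf P \<epsilon> ny (fst (X n)) (snd (X n)) \<and> val ny (fst (X n)) (snd (X n)) < m + inverse (real (Suc n))"
    using choice[OF ex] by blast
  define L where "L n = fst (X n)" for n
  define Pp where "Pp n = snd (X n)" for n
  have cL: "conf P \<epsilon> ny (L n) (Pp n)" for n using X by (simp add: L_def Pp_def)
  have vL: "val ny (L n) (Pp n) < m + inverse (real (Suc n))" for n using X by (simp add: L_def Pp_def)
  have vL2: "m \<le> val ny (L n) (Pp n)" for n using mle cL unfolding C_def core_iff by blast
  have fe: "feas P \<epsilon> (Pp n u)" if "u < ny" for n u using cL that by (simp add: conf_def)
  define f where "f n = (\<lambda>(u, y). if y < ny then Pp n u $ y else L n u)" for n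
  define B where "B = {..<ny} \<times> {..ny}"
  have Bf: "finite B" by (simp add: B_def)
  have fb: "\<bar>f n i\<bar> \<le> 1" if iB: "i \<in> B" for n i
  proof -
    obtain u y where i: "i = (u, y)" "u < ny" "y \<le> ny" using iB by (auto simp: B_def)
    show ?thesis
    proof (cases "y < ny")
      case True then show ?thesis using feas_b[OF fe[OF i(2)] True] i by (simp add: f_def)
    next
      case False then show ?thesis using conf_b[OF cL i(2)] i by (simp add: f_def)
    qed
  qed
  have bnd: "bounded ((\<lambda>x. x i) ` range f)" if "i \<in> B" for i
    unfolding bounded_iff using fb[OF that] by (intro exI[of _ 1]) auto
  obtain l r where r: "strict_mono r"
    and lim: "\<forall>e>0. eventually (\<lambda>n. \<forall>i\<in>B. dist (f (r n) i) (l i) < e) sequentially"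
    using compact_lemma_general[where proj = "\<lambda>x i. x i" and unproj = "\<lambda>e. e" and basis = B and f = f,
        OF Bf bnd] by blast
  have conv: "(\<lambda>n. f (r n) i) \<longlonglongrightarrow> l i" if iB: "i \<in> B" for i
  proof (rule tendstoI)
    fix e :: real assume "e > 0"
    then have "eventually (\<lambda>n. \<forall>i\<in>B. dist (f (r n) i) (l i) < e) sequentially" using lim by blast
    then show "eventually (\<lambda>n. dist (f (r n) i) (l i) < e) sequentially"
      by (rule eventually_mono) (use iB in blast)
  qed
  define lamL where "lamL u = l (u, ny)" for u
  define pL where "pL u = vec ny (\<lambda>y. l (u, y))" for u
  have cvL: "(\<lambda>n. L (r n) u) \<longlonglongrightarrow> lamL u" if "u < ny" for u
    using conv[of "(u, ny)"] that by (simp add: B_def f_def lamL_def)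
  have cvP: "(\<lambda>n. Pp (r n) u $ y) \<longlonglongrightarrow> pL u $ y" if "u < ny" "y < ny" for u y
    using conv[of "(u, y)"] that by (simp add: B_def f_def pL_def)
  have pLc: "pL u \<in> carrier_vec ny" for u by (simp add: pL_def)
  have feasL: "feas P \<epsilon> (pL u)" if u: "u < ny" for u
  proof -
    have nn: "pL u $ y \<ge> 0" if y: "y < ny" for y
      by (rule LIMSEQ_le_const[OF cvP[OF u y]]) (use feas_b(1)[OF fe[OF u] y] in auto)
    have "(\<lambda>n. \<Sum>y<ny. Pp (r n) u $ y) \<longlonglongrightarrow> (\<Sum>y<ny. pL u $ y)"
      by (intro tendsto_sum cvP[OF u]) auto
    moreover have "(\<lambda>n. \<Sum>y<ny. Pp (r n) u $ y) = (\<lambda>n. 1)"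
      using fe[OF u] by (simp add: feas_def)
    ultimately have s1: "(\<Sum>y<ny. pL u $ y) = 1" using LIMSEQ_unique tendsto_const by metis
    have pc: "Pp (r n) u \<in> carrier_vec ny" for n using fe[OF u] by (simp add: feas_def)
    have "(\<lambda>n. l1norm (PXgY P *\<^sub>v Pp (r n) u - PX P)) \<longlonglongrightarrow> l1norm (PXgY P *\<^sub>v pL u - PX P)"
      unfolding l1A[OF pc] l1A[OF pLc] by (intro tendsto_intros cvP[OF u]) auto
    moreover have "l1norm (PXgY P *\<^sub>v Pp (r n) u - PX P) \<le> \<epsilon>" for n using fe[OF u] by (simp add: feas_def)
    ultimately have "l1norm (PXgY P *\<^sub>v pL u - PX P) \<le> \<epsilon>" by (intro LIMSEQ_le_const2) auto
    then show ?thesis unfolding feas_def using nn s1 pLc by simp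
  qed
  have confL: "conf P \<epsilon> ny lamL pL"
    unfolding conf_def dc
  proof (intro conjI allI impI)
    show "lamL u \<ge> 0" if u: "u < ny" for u
      by (rule LIMSEQ_le_const[OF cvL[OF u]]) (use conf_b(1)[OF cL u] in auto)
    have "(\<lambda>n. \<Sum>u<ny. L (r n) u) \<longlonglongrightarrow> (\<Sum>u<ny. lamL u)"
      by (intro tendsto_sum cvL) auto
    moreover have "(\<lambda>n. \<Sum>u<ny. L (r n) u) = (\<lambda>n. 1)" using cL by (simp add: conf_def)
    ultimately show "(\<Sum>u<ny. lamL u) = 1" using LIMSEQ_unique tendsto_const by metis
    show "feas P \<epsilon> (pL u)" if "u < ny" for u using feasL that .
    fix y assume y: "y < ny"
    have "(\<lambda>n. \<Sum>u<ny. L (r n) u * Pp (r n) u $ y) \<longlonglongrightarrow> (\<Sum>u<ny. lamL u * pL u $ y)"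
      by (intro tendsto_sum tendsto_mult cvL cvP y) auto
    moreover have "(\<lambda>n. \<Sum>u<ny. L (r n) u * Pp (r n) u $ y) = (\<lambda>n. PY P $ y)" using cL y by (simp add: conf_def)
    ultimately show "(\<Sum>u<ny. lamL u * pL u $ y) = PY P $ y" using LIMSEQ_unique tendsto_const by metis
  qed
  have v1: "(\<lambda>n. val ny (L (r n)) (Pp (r n))) \<longlonglongrightarrow> val ny lamL pL"
  proof -
    have pc: "Pp (r n) u \<in> carrier_vec ny" if "u < ny" for n u using fe[OF that] by (simp add: feas_def)
    have e1: "val ny (L (r n)) (Pp (r n)) = (\<Sum>u<ny. L (r n) u * - (\<Sum>y<ny. ent (Pp (r n) u $ y)))" for n
      unfolding val_def by (intro sum.cong) (auto simp: entropy_c[OF pc])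
    have e2: "val ny lamL pL = (\<Sum>u<ny. lamL u * - (\<Sum>y<ny. ent (pL u $ y)))"
      unfolding val_def by (intro sum.cong) (auto simp: entropy_c[OF pLc])
    show ?thesis unfolding e1 e2
      by (intro tendsto_sum tendsto_mult tendsto_minus cvL isCont_tendsto_compose[OF isCont_ent] cvP) auto
  qed
  have v2: "(\<lambda>n. val ny (L n) (Pp n)) \<longlonglongrightarrow> m"
  proof (rule tendsto_sandwich[where f="\<lambda>n. m" and h="\<lambda>n. m + inverse (real (Suc n))"])
    show "eventually (\<lambda>n. m \<le> val ny (L n) (Pp n)) sequentially" using vL2 by simp
    show "eventually (\<lambda>n. val ny (L n) (Pp n) \<le> m + inverse (real (Suc n))) sequentially"
      using vL by (simp add: less_imp_le)
    show "(\<lambda>n. m) \<longlonglongrightarrow> m" by simp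
    show "(\<lambda>n. m + inverse (real (Suc n))) \<longlonglongrightarrow> m"
      using tendsto_add[OF tendsto_const LIMSEQ_inverse_real_of_nat, of m] by simp
  qed
  have "(\<lambda>n. val ny (L (r n)) (Pp (r n))) \<longlonglongrightarrow> m"
    using LIMSEQ_subseq_LIMSEQ[OF v2 r] by (simp add: o_def)
  then have vm: "val ny lamL pL = m" using v1 LIMSEQ_unique by metis
  have "m \<in> C" unfolding C_def core_iff using confL vm by metis
  then show ?thesis unfolding is_min_of_def C_def[symmetric] using mle by blast
qed

lemma left_sub_core: "left_values P \<epsilon> \<subseteq> core_values P \<epsilon>"
proof
  fix H assume "H \<in> left_values P \<epsilon>"
  then obtain k :: nat and Q where Q0: "\<forall>u<k. \<forall>y<ny. Q u y \<ge> 0" and Q1: "\<forall>y<ny. (\<Sum>u<k. Q u y) = 1"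
    and Qc: "\<forall>u<k. PU_of P Q u > 0 \<longrightarrow> l1norm (PXgU_of P Q u - PX P) \<le> \<epsilon>"
    and H: "H = (\<Sum>u<k. PU_of P Q u * entropy (PYgU_of P Q u))"
    unfolding left_values_def by auto
  define lam where "lam u = PU_of P Q u" for u
  define p where "p u = (if lam u > 0 then PYgU_of P Q u else PY P)" for u
  have lamd: "lam u = (\<Sum>y<ny. PY P $ y * Q u y)" for u unfolding lam_def PU_of_def by simp
  have lam0: "lam u \<ge> 0" if "u < k" for u
    unfolding lamd using Q0 that PYpos' by (auto intro!: sum_nonneg simp: less_imp_le)
  have Qz: "Q u y = 0" if "u < k" "lam u = 0" "y < ny" for u y
  proof -
    have "\<forall>y\<in>{..<ny}. PY P $ y * Q u y = 0"
      using that(2) unfolding lamd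
      by (subst sum_nonneg_eq_0_iff[symmetric]) (use Q0 that PYpos' in \<open>auto simp: less_imp_le\<close>)
    then show ?thesis using that(3) by auto
  qed
  have sumlam: "(\<Sum>u<k. lam u) = 1"
  proof -
    have "(\<Sum>u<k. lam u) = (\<Sum>y<ny. PY P $ y * (\<Sum>u<k. Q u y))"
      unfolding lamd by (simp add: sum.swap[of _ "{..<k}"] sum_distrib_left)
    also have "\<dots> = 1" using Q1 sum_PY by simp
    finally show ?thesis .
  qed
  have feas: "feas P \<epsilon> (p u)" if u: "u < k" for u
  proof (cases "lam u > 0")
    case True
    have pu: "p u = PYgU_of P Q u" using True by (simp add: p_def)
    have Ap: "PXgY P *\<^sub>v p u = PXgU_of P Q u"
    proof (rule eq_vecI)
      fix x assume "x < dim_vec (PXgU_of P Q u)"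
      then have x: "x < nx" by (simp add: PXgU_of_def)
      have "(PXgY P *\<^sub>v p u) $ x = (\<Sum>y<ny. P $$ (x,y) / PY P $ y * (PY P $ y * Q u y / lam u))"
        using x by (simp add: mv_sum[OF A_carr _ x] pu PYgU_of_def lam_def del: index_mult_mat_vec)
      also have "\<dots> = (\<Sum>y<ny. P $$ (x,y) * Q u y) / lam u"
        by (simp add: sum_divide_distrib)
      finally show "(PXgY P *\<^sub>v p u) $ x = PXgU_of P Q u $ x"
        using x by (simp add: PXgU_of_def lam_def)
    qed (simp add: PXgU_of_def)
    have "(\<Sum>y<ny. p u $ y) = (\<Sum>y<ny. PY P $ y * Q u y) / lam u"
      by (simp add: pu PYgU_of_def lam_def sum_divide_distrib)
    also have "\<dots> = 1" using True lamd by simp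
    finally have s1: "(\<Sum>y<ny. p u $ y) = 1" .
    show ?thesis unfolding feas_def using s1 Ap Qc u True Q0 PYpos'
      by (auto simp: pu PYgU_of_def lam_def less_imp_le)
  next
    case False
    then show ?thesis using feas_PY by (simp add: p_def)
  qed
  have mix: "(\<Sum>u<k. lam u * p u $ y) = PY P $ y" if y: "y < ny" for y
  proof -
    have "(\<Sum>u<k. lam u * p u $ y) = (\<Sum>u<k. PY P $ y * Q u y)"
    proof (rule sum.cong)
      fix u assume "u \<in> {..<k}"
      then have u: "u < k" by simp
      show "lam u * p u $ y = PY P $ y * Q u y"
      proof (cases "lam u > 0")
        case True then show ?thesis using y by (simp add: p_def PYgU_of_def lam_def)
      next
        case False then have "lam u = 0" using lam0[OF u] by simp
        then show ?thesis using Qz[OF u _ y] by simp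
      qed
    qed simp
    also have "\<dots> = PY P $ y" using Q1 y by (simp add: sum_distrib_left[symmetric])
    finally show ?thesis .
  qed
  have Hc: "H = (\<Sum>u<k. lam u * entropy (p u))"
    unfolding H
  proof (rule sum.cong)
    fix u assume "u \<in> {..<k}"
    then have u: "u < k" by simp
    show "PU_of P Q u * entropy (PYgU_of P Q u) = lam u * entropy (p u)"
    proof (cases "lam u > 0")
      case True then show ?thesis by (simp add: p_def lam_def)
    next
      case False then have "lam u = 0" using lam0[OF u] by simp
      then show ?thesis by (simp add: lam_def)
    qed
  qed simp
  show "H \<in> core_values P \<epsilon>" unfolding core_values_def
    using lam0 sumlam feas mix Hc by auto
qed

lemma core_sub_left: "core_values P \<epsilon> \<subseteq> left_values P \<epsilon>"
proof
  fix H assume "H \<in> core_values P \<epsilon>"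
  then obtain k :: nat and lam p where lam0: "\<forall>u<k. lam u \<ge> 0" and sumlam: "(\<Sum>u<k. lam u) = 1"
    and feas: "\<forall>u<k. feas P \<epsilon> (p u)" and mix: "\<forall>y<ny. (\<Sum>u<k. lam u * p u $ y) = PY P $ y"
    and H: "H = (\<Sum>u<k. lam u * entropy (p u))"
    unfolding core_values_def dc by (elim CollectE exE conjE) (rule that, assumption+)
  define Q where "Q u y = lam u * p u $ y / PY P $ y" for u y
  have pc: "u < k \<Longrightarrow> p u \<in> carrier_vec ny" for u using feas by (auto simp: feas_def)
  have pnn: "u < k \<Longrightarrow> y < ny \<Longrightarrow> p u $ y \<ge> 0" for u y using feas by (auto simp: feas_def)
  have ps: "u < k \<Longrightarrow> (\<Sum>y<ny. p u $ y) = 1" for u using feas by (auto simp: feas_def)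
  have pl: "u < k \<Longrightarrow> l1norm (PXgY P *\<^sub>v p u - PX P) \<le> \<epsilon>" for u using feas by (auto simp: feas_def)
  have Q0: "\<forall>u<k. \<forall>y<ny. Q u y \<ge> 0"
    using lam0 pnn PYpos' by (auto simp: Q_def less_imp_le)
  have Q1: "\<forall>y<ny. (\<Sum>u<k. Q u y) = 1"
    using mix by (auto simp: Q_def sum_divide_distrib[symmetric])
  have PU: "PU_of P Q u = lam u" if u: "u < k" for u
  proof -
    have "PU_of P Q u = (\<Sum>y<ny. lam u * p u $ y)"
      unfolding PU_of_def Q_def by (rule sum.cong) auto
    also have "\<dots> = lam u" using ps[OF u] by (simp add: sum_distrib_left[symmetric])
    finally show ?thesis .
  qed
  have PXU: "PXgU_of P Q u = PXgY P *\<^sub>v p u" if u: "u < k" and pos: "lam u > 0" for u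
  proof (rule eq_vecI)
    fix x assume "x < dim_vec (PXgY P *\<^sub>v p u)"
    then have x: "x < nx" by simp
    have "PXgU_of P Q u $ x = (\<Sum>y<ny. P $$ (x,y) * (lam u * p u $ y / PY P $ y)) / lam u"
      using x by (simp add: PXgU_of_def PU[OF u] Q_def)
    also have "\<dots> = (\<Sum>y<ny. P $$ (x,y) / PY P $ y * p u $ y)"
      using pos by (simp add: sum_divide_distrib)
    finally show "PXgU_of P Q u $ x = (PXgY P *\<^sub>v p u) $ x"
      using x by (simp add: mv_sum[OF A_carr pc[OF u] x] del: index_mult_mat_vec)
  qed (simp add: PXgU_of_def)
  have PYU: "PYgU_of P Q u = p u" if u: "u < k" and pos: "lam u > 0" for u
    using pc[OF u] pos by (intro eq_vecI) (auto simp: PYgU_of_def PU[OF u] Q_def)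
  have Qc: "\<forall>u<k. PU_of P Q u > 0 \<longrightarrow> l1norm (PXgU_of P Q u - PX P) \<le> \<epsilon>"
    using PU PXU pl by auto
  have Hc: "H = (\<Sum>u<k. PU_of P Q u * entropy (PYgU_of P Q u))"
    unfolding H
  proof (rule sum.cong)
    fix u assume "u \<in> {..<k}"
    then have u: "u < k" by simp
    show "lam u * entropy (p u) = PU_of P Q u * entropy (PYgU_of P Q u)"
    proof (cases "lam u > 0")
      case True then show ?thesis using PU[OF u] PYU[OF u] by simp
    next
      case False then have "lam u = 0" using lam0 u by force
      then show ?thesis using PU[OF u] by simp
    qed
  qed simp
  show "H \<in> left_values P \<epsilon>" unfolding left_values_def
    using Q0 Q1 Qc Hc by auto
qed

end

locale setting2 = setting +
  fixes U S V M :: "real mat"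
  assumes fr: "\<forall>c \<in> carrier_vec nx. transpose_mat (PXgY P) *\<^sub>v c = 0\<^sub>v ny \<longrightarrow> c = 0\<^sub>v nx"
    and inv: "invertible_mat (PXgY1 P)"
    and svd: "is_svd (PXgY P) U S V"
    and Mdef: "M = mat nx ny (\<lambda>(i, j). V $$ (j, i))"
begin

lemma Uc: "U \<in> carrier_mat nx nx" and Vc: "V \<in> carrier_mat ny ny" and Sc: "S \<in> carrier_mat nx ny"
  and UU: "transpose_mat U * U = 1\<^sub>m nx"
  and Soff: "\<And>i j. i < nx \<Longrightarrow> j < ny \<Longrightarrow> i \<noteq> j \<Longrightarrow> S $$ (i, j) = 0"
  and Aeq: "PXgY P = U * S * transpose_mat V"
  using svd unfolding is_svd_def by auto

lemma UUv: "v \<in> carrier_vec nx \<Longrightarrow> transpose_mat U *\<^sub>v (U *\<^sub>v v) = v"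
proof -
  assume v: "v \<in> carrier_vec nx"
  have UT: "transpose_mat U \<in> carrier_mat nx nx" using Uc by simp
  have "transpose_mat U *\<^sub>v (U *\<^sub>v v) = (transpose_mat U * U) *\<^sub>v v"
    by (rule assoc_mult_mat_vec[symmetric, OF UT Uc v])
  then show ?thesis using UU v by simp
qed

lemma Mc: "M \<in> carrier_mat nx ny" by (simp add: Mdef)

lemma S_diag_nz: "i < nx \<Longrightarrow> S $$ (i,i) \<noteq> 0"
proof
  assume i: "i < nx" and S0: "S $$ (i,i) = 0"
  define e :: "real vec" where "e = unit_vec nx i"
  have ec: "e \<in> carrier_vec nx" by (simp add: e_def)
  define c where "c = U *\<^sub>v e"
  have cc: "c \<in> carrier_vec nx" using Uc ec by (simp add: c_def)
  have US: "U * S \<in> carrier_mat nx ny" using Uc Sc by simp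
  have At: "transpose_mat (PXgY P) = V * (transpose_mat S * transpose_mat U)"
  proof -
    have "transpose_mat (U * S * transpose_mat V) = transpose_mat (transpose_mat V) * transpose_mat (U * S)"
      by (rule transpose_mult[OF US]) (use Vc in simp)
    also have "transpose_mat (U * S) = transpose_mat S * transpose_mat U"
      by (rule transpose_mult[OF Uc Sc])
    finally show ?thesis unfolding Aeq by simp
  qed
  have UUe: "transpose_mat U *\<^sub>v c = e"
    unfolding c_def using UUv[OF ec] .
  have Se: "transpose_mat S *\<^sub>v e = 0\<^sub>v ny"
  proof (rule eq_vecI)
    fix j assume "j < dim_vec (0\<^sub>v ny :: real vec)"
    then have j: "j < ny" by simp
    have "(transpose_mat S *\<^sub>v e) $ j = (\<Sum>l<nx. S $$ (l, j) * e $ l)"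
      using Sc j ec by (simp add: mv_sum[of _ ny nx] del: index_mult_mat_vec)
    also have "\<dots> = (\<Sum>l<nx. if l = i then S $$ (i, j) else 0)"
      by (rule sum.cong) (use i in \<open>auto simp: e_def\<close>)
    also have "\<dots> = S $$ (i, j)" using i by simp
    also have "\<dots> = 0" using S0 Soff[OF i j] by (cases "i = j") auto
    finally show "(transpose_mat S *\<^sub>v e) $ j = 0\<^sub>v ny $ j" using j by simp
  qed (use Sc in simp)
  have ST: "transpose_mat S \<in> carrier_mat ny nx" using Sc by simp
  have UT: "transpose_mat U \<in> carrier_mat nx nx" using Uc by simp
  have SU: "transpose_mat S * transpose_mat U \<in> carrier_mat ny nx" using ST UT by simp
  have "transpose_mat (PXgY P) *\<^sub>v c = V *\<^sub>v (transpose_mat S *\<^sub>v (transpose_mat U *\<^sub>v c))"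
    unfolding At assoc_mult_mat_vec[OF Vc SU cc] assoc_mult_mat_vec[OF ST UT cc] ..
  also have "\<dots> = 0\<^sub>v ny" unfolding UUe Se by (rule mv_zero[OF Vc])
  finally have "c = 0\<^sub>v nx" using fr cc by auto
  then have "e = 0\<^sub>v nx" using UUe mv_zero[OF UT] by simp
  then show False using i by (metis e_def index_unit_vec(2) index_zero_vec(1) zero_neq_one)
qed

lemma M_idx: assumes w: "w \<in> carrier_vec ny" and i: "i < nx"
  shows "(M *\<^sub>v w) $ i = (transpose_mat V *\<^sub>v w) $ i"
proof -
  have "(M *\<^sub>v w) $ i = (\<Sum>j<ny. M $$ (i,j) * w $ j)" by (rule mv_sum[OF Mc w i])
  also have "\<dots> = (\<Sum>j<ny. transpose_mat V $$ (i,j) * w $ j)"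
    using Vc i nxny by (intro sum.cong) (auto simp: Mdef)
  also have "\<dots> = (transpose_mat V *\<^sub>v w) $ i"
    using Vc i nxny w by (simp add: mv_sum[of "transpose_mat V" ny ny] del: index_mult_mat_vec)
  finally show ?thesis .
qed

lemma key0: assumes w: "w \<in> carrier_vec ny"
  shows "(M *\<^sub>v w = 0\<^sub>v nx) = (PXgY P *\<^sub>v w = 0\<^sub>v nx)"
proof -
  define z where "z = transpose_mat V *\<^sub>v w"
  have zc: "z \<in> carrier_vec ny" using Vc w by (simp add: z_def)
  have Sz: "(S *\<^sub>v z) $ i = S $$ (i,i) * z $ i" if i: "i < nx" for i
  proof -
    have "(S *\<^sub>v z) $ i = (\<Sum>j<ny. S $$ (i,j) * z $ j)"
      using Sc zc i by (simp add: mv_sum del: index_mult_mat_vec)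
    also have "\<dots> = (\<Sum>j<ny. if j = i then S $$ (i,i) * z $ i else 0)"
      by (rule sum.cong) (use Soff i in auto)
    also have "\<dots> = S $$ (i,i) * z $ i" using i nxny by simp
    finally show ?thesis .
  qed
  have SV: "S * transpose_mat V \<in> carrier_mat nx ny" using Sc Vc by simp
  have US: "U * S \<in> carrier_mat nx ny" using Uc Sc by simp
  have VT: "transpose_mat V \<in> carrier_mat ny ny" using Vc by simp
  have Aw: "PXgY P *\<^sub>v w = U *\<^sub>v (S *\<^sub>v z)"
  proof -
    have "PXgY P *\<^sub>v w = (U * S) *\<^sub>v z" unfolding Aeq z_def by (rule assoc_mult_mat_vec[OF US VT w])
    also have "\<dots> = U *\<^sub>v (S *\<^sub>v z)" by (rule assoc_mult_mat_vec[OF Uc Sc zc])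
    finally show ?thesis .
  qed
  have SzC: "S *\<^sub>v z \<in> carrier_vec nx" using Sc zc by simp
  show ?thesis
  proof
    assume "M *\<^sub>v w = 0\<^sub>v nx"
    then have "z $ i = 0" if "i < nx" for i using M_idx[OF w that] that
      by (metis index_zero_vec(1) z_def)
    then have "S *\<^sub>v z = 0\<^sub>v nx" using Sz Sc by (intro eq_vecI) auto
    then show "PXgY P *\<^sub>v w = 0\<^sub>v nx" using Aw Uc by simp
  next
    assume "PXgY P *\<^sub>v w = 0\<^sub>v nx"
    then have "transpose_mat U *\<^sub>v (U *\<^sub>v (S *\<^sub>v z)) = 0\<^sub>v nx" using Aw Uc by simp
    then have "S *\<^sub>v z = 0\<^sub>v nx" using UUv[OF SzC] by simp
    then have "z $ i = 0" if "i < nx" for i using Sz[OF that] S_diag_nz[OF that] that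
      by (metis index_zero_vec(1) mult_eq_0_iff)
    then show "M *\<^sub>v w = 0\<^sub>v nx" using M_idx[OF w] Mc
      by (intro eq_vecI) (auto simp: z_def)
  qed
qed

lemma key: assumes y: "y \<in> carrier_vec ny" and z: "z \<in> carrier_vec ny"
  shows "(M *\<^sub>v y = M *\<^sub>v z) = (PXgY P *\<^sub>v y = PXgY P *\<^sub>v z)"
proof -
  have yz: "y - z \<in> carrier_vec ny" using y z by simp
  have "(M *\<^sub>v y = M *\<^sub>v z) = (M *\<^sub>v y - M *\<^sub>v z = 0\<^sub>v nx)"
    by (rule vec_minus_0[OF mult_mat_vec_carrier[OF Mc y] mult_mat_vec_carrier[OF Mc z], symmetric])
  also have "\<dots> = (M *\<^sub>v (y - z) = 0\<^sub>v nx)"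
    by (simp only: mult_minus_distrib_mat_vec[OF Mc y z])
  also have "\<dots> = (PXgY P *\<^sub>v (y - z) = 0\<^sub>v nx)" by (rule key0[OF yz])
  also have "\<dots> = (PXgY P *\<^sub>v y - PXgY P *\<^sub>v z = 0\<^sub>v nx)"
    by (simp only: mult_minus_distrib_mat_vec[OF A_carr y z])
  also have "\<dots> = (PXgY P *\<^sub>v y = PXgY P *\<^sub>v z)"
    by (rule vec_minus_0[OF mult_mat_vec_carrier[OF A_carr y] mult_mat_vec_carrier[OF A_carr z]])
  finally show ?thesis .
qed

lemma A1c: "PXgY1 P \<in> carrier_mat nx nx" by (simp add: PXgY1_def)

lemma Pinv: "the (mat_inverse (PXgY1 P)) \<in> carrier_mat nx nx \<and> PXgY1 P * the (mat_inverse (PXgY1 P)) = 1\<^sub>m nx"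
proof -
  obtain B where AB: "PXgY1 P * B = 1\<^sub>m nx" and BA: "B * PXgY1 P = 1\<^sub>m (dim_row B)"
    using inv A1c unfolding invertible_mat_def inverts_mat_def by auto
  have "dim_col B = nx" using arg_cong[OF AB, of dim_col] by simp
  moreover have "dim_row B = nx" using arg_cong[OF BA, of dim_col] A1c by simp
  ultimately have Bc: "B \<in> carrier_mat nx nx" by auto
  have "PXgY1 P \<in> Units (ring_mat TYPE(real) nx ())"
    unfolding Units_def ring_mat_def using A1c Bc AB BA by auto
  moreover have "mat_inverse (PXgY1 P) = None \<Longrightarrow> PXgY1 P \<notin> Units (ring_mat TYPE(real) nx ())"
    by (rule mat_inverse(1)[OF A1c])
  ultimately obtain B' where B': "mat_inverse (PXgY1 P) = Some B'"
    by (cases "mat_inverse (PXgY1 P)") auto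
  then show ?thesis using mat_inverse(2)[OF A1c B'] by auto
qed

lemma app0: assumes v: "v \<in> carrier_vec nx"
  shows "PXgY P *\<^sub>v (v @\<^sub>v 0\<^sub>v (ny - nx)) = PXgY1 P *\<^sub>v v"
proof (rule eq_vecI)
  have dv: "dim_vec v = nx" using v by auto
  have dw: "dim_vec (v @\<^sub>v 0\<^sub>v (ny - nx)) = ny" using dv nxny by simp
  have vc: "v @\<^sub>v 0\<^sub>v (ny - nx) \<in> carrier_vec ny" using dw unfolding carrier_vec_def by simp
  have z: "(v @\<^sub>v 0\<^sub>v (ny - nx)) $ i = 0" if "nx \<le> i" "i < ny" for i
    using that dv nxny by (subst index_append_vec) auto
  have nz: "(v @\<^sub>v 0\<^sub>v (ny - nx)) $ i = v $ i" if "i < nx" for i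
    using that dv nxny by (subst index_append_vec) auto
  fix x assume "x < dim_vec (PXgY1 P *\<^sub>v v)"
  then have x: "x < nx" using A1c by simp
  have "(PXgY P *\<^sub>v (v @\<^sub>v 0\<^sub>v (ny - nx))) $ x = (\<Sum>j<ny. PXgY P $$ (x,j) * (v @\<^sub>v 0\<^sub>v (ny - nx)) $ j)"
    by (rule mv_sum[OF A_carr vc x])
  also have "\<dots> = (\<Sum>j<nx. PXgY P $$ (x,j) * (v @\<^sub>v 0\<^sub>v (ny - nx)) $ j)"
  proof (rule sum.mono_neutral_right)
    show "{..<nx} \<subseteq> {..<ny}" using nxny by auto
    show "\<forall>i\<in>{..<ny} - {..<nx}. PXgY P $$ (x, i) * (v @\<^sub>v 0\<^sub>v (ny - nx)) $ i = 0"
      using z by simp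
  qed simp
  also have "\<dots> = (\<Sum>j<nx. PXgY1 P $$ (x,j) * v $ j)"
  proof (rule sum.cong)
    fix j assume "j \<in> {..<nx}"
    then have j: "j < nx" by simp
    have "PXgY1 P $$ (x,j) = PXgY P $$ (x,j)" using x j unfolding PXgY1_def by simp
    then show "PXgY P $$ (x,j) * (v @\<^sub>v 0\<^sub>v (ny - nx)) $ j = PXgY1 P $$ (x,j) * v $ j"
      using nz[OF j] by simp
  qed simp
  also have "\<dots> = (PXgY1 P *\<^sub>v v) $ x" by (rule mv_sum[OF A1c v x, symmetric])
  finally show "(PXgY P *\<^sub>v (v @\<^sub>v 0\<^sub>v (ny - nx))) $ x = (PXgY1 P *\<^sub>v v) $ x" .
next
  show "dim_vec (PXgY P *\<^sub>v (v @\<^sub>v 0\<^sub>v (ny - nx))) = dim_vec (PXgY1 P *\<^sub>v v)"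
    using A1c by simp
qed

lemma S_char: assumes J: "J \<in> carrier_vec nx"
  shows "(y \<in> S_set P M \<epsilon> J) = (y \<in> carrier_vec ny \<and> (\<forall>i<ny. y $ i \<ge> 0) \<and>
     PXgY P *\<^sub>v y = PX P + \<epsilon> \<cdot>\<^sub>v J)"
proof -
  define Pi where "Pi = the (mat_inverse (PXgY1 P))"
  have Pic: "Pi \<in> carrier_mat nx nx" and APi: "PXgY1 P * Pi = 1\<^sub>m nx" using Pinv by (auto simp: Pi_def)
  define w where "w = (Pi *\<^sub>v J) @\<^sub>v 0\<^sub>v (ny - nx)"
  have PiJ: "Pi *\<^sub>v J \<in> carrier_vec nx" using Pic J by simp
  have "dim_vec w = ny" using nxny PiJ unfolding w_def carrier_vec_def by simp
  then have wc: "w \<in> carrier_vec ny" unfolding carrier_vec_def by simp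
  define t where "t = PY P + \<epsilon> \<cdot>\<^sub>v w"
  have ewc: "\<epsilon> \<cdot>\<^sub>v w \<in> carrier_vec ny" using wc by simp
  have tc: "t \<in> carrier_vec ny" unfolding t_def using ewc by simp
  have Mt: "M *\<^sub>v t = M *\<^sub>v PY P + \<epsilon> \<cdot>\<^sub>v (M *\<^sub>v w)"
    unfolding t_def mult_add_distrib_mat_vec[OF Mc PY_carr ewc] mult_mat_vec[OF Mc wc] ..
  have Aw: "PXgY P *\<^sub>v w = J"
  proof -
    have "PXgY P *\<^sub>v w = PXgY1 P *\<^sub>v (Pi *\<^sub>v J)" unfolding w_def by (rule app0[OF PiJ])
    also have "\<dots> = (PXgY1 P * Pi) *\<^sub>v J" by (rule assoc_mult_mat_vec[OF A1c Pic J, symmetric])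
    also have "\<dots> = J" using APi J by simp
    finally show ?thesis .
  qed
  have At: "PXgY P *\<^sub>v t = PX P + \<epsilon> \<cdot>\<^sub>v J"
    unfolding t_def mult_add_distrib_mat_vec[OF A_carr PY_carr ewc] mult_mat_vec[OF A_carr wc] Aw A_PY ..
  have Sset: "S_set P M \<epsilon> J = {y \<in> carrier_vec ny. M *\<^sub>v y = M *\<^sub>v t \<and> (\<forall>i<ny. 0 \<le> y $ i)}"
    by (simp only: S_set_def dc dr Mt w_def Pi_def)
  show ?thesis
  proof (cases "y \<in> carrier_vec ny")
    case True
    show ?thesis unfolding Sset mem_Collect_eq key[OF True tc] At using True by (intro iffI) auto
  next
    case False
    then show ?thesis unfolding Sset by simp
  qed
qed

lemma right_sub_core: "right_values P M \<epsilon> \<subseteq> core_values P \<epsilon>"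
proof
  fix H assume "H \<in> right_values P M \<epsilon>"
  then obtain k :: nat and PU J Pyu where PU0: "\<forall>u<k. PU u \<ge> 0" and PU1: "(\<Sum>u<k. PU u) = 1"
    and JS: "\<forall>u<k. J u \<in> carrier_vec nx \<and> Pyu u \<in> S_set P M \<epsilon> (J u)"
    and mix: "\<forall>y<ny. (\<Sum>u<k. PU u * Pyu u $ y) = PY P $ y"
    and P1: "\<forall>u<k. (\<Sum>x<nx. J u $ x) = 0"
    and P3: "\<forall>u<k. (\<Sum>x<nx. \<bar>J u $ x\<bar>) \<le> 1"
    and H: "H = (\<Sum>u<k. PU u * entropy (Pyu u))"
    unfolding right_values_def dc dr by (elim CollectE exE conjE) (rule that, assumption+)
  have feas: "feas P \<epsilon> (Pyu u)" if u: "u < k" for u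
  proof -
    have Jc: "J u \<in> carrier_vec nx" using JS u by auto
    have yc: "Pyu u \<in> carrier_vec ny" and ynn: "\<forall>i<ny. Pyu u $ i \<ge> 0"
      and Ay: "PXgY P *\<^sub>v Pyu u = PX P + \<epsilon> \<cdot>\<^sub>v J u"
      using JS u S_char[OF Jc] by auto
    have "(\<Sum>i<ny. Pyu u $ i) = (\<Sum>x<nx. (PXgY P *\<^sub>v Pyu u) $ x)" by (rule sum_Av[OF yc, symmetric])
    also have "\<dots> = (\<Sum>x<nx. PX P $ x + \<epsilon> * J u $ x)"
      unfolding Ay by (rule sum.cong) (use Jc in auto)
    also have "\<dots> = 1" using sum_PX P1 u by (simp add: sum.distrib sum_distrib_left[symmetric])
    finally have s1: "(\<Sum>i<ny. Pyu u $ i) = 1" .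
    have "l1norm (PXgY P *\<^sub>v Pyu u - PX P) = (\<Sum>x<nx. \<bar>\<epsilon> * J u $ x\<bar>)"
      unfolding l1norm_def Ay by (rule sum.cong) (use Jc in auto)
    also have "\<dots> = \<epsilon> * (\<Sum>x<nx. \<bar>J u $ x\<bar>)"
      using eps by (simp add: abs_mult sum_distrib_left)
    also have "\<dots> \<le> \<epsilon>" using P3 u eps by (simp add: mult_left_le)
    finally show ?thesis unfolding feas_def using yc ynn s1 by simp
  qed
  show "H \<in> core_values P \<epsilon>" unfolding core_values_def dc
    using PU0 PU1 feas mix H by blast
qed

lemma core_sub_right: "core_values P \<epsilon> \<subseteq> right_values P M \<epsilon>"
proof
  fix H assume "H \<in> core_values P \<epsilon>"
  then obtain k :: nat and lam p where lam0: "\<forall>u<k. lam u \<ge> 0" and sumlam: "(\<Sum>u<k. lam u) = 1"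
    and feas: "\<forall>u<k. feas P \<epsilon> (p u)" and mix: "\<forall>y<ny. (\<Sum>u<k. lam u * p u $ y) = PY P $ y"
    and H: "H = (\<Sum>u<k. lam u * entropy (p u))"
    unfolding core_values_def dc by (elim CollectE exE conjE) (rule that, assumption+)
  have pc: "u < k \<Longrightarrow> p u \<in> carrier_vec ny" for u using feas by (auto simp: feas_def)
  have pnn: "u < k \<Longrightarrow> \<forall>y<ny. p u $ y \<ge> 0" for u using feas by (auto simp: feas_def)
  have ps: "u < k \<Longrightarrow> (\<Sum>y<ny. p u $ y) = 1" for u using feas by (auto simp: feas_def)
  have pl: "u < k \<Longrightarrow> l1norm (PXgY P *\<^sub>v p u - PX P) \<le> \<epsilon>" for u using feas by (auto simp: feas_def)
  define J where "J u = (1 / \<epsilon>) \<cdot>\<^sub>v (PXgY P *\<^sub>v p u - PX P)" for u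
  have dJ[simp]: "dim_vec (J u) = nx" for u by (simp add: J_def)
  have Jc: "J u \<in> carrier_vec nx" for u by (rule carrier_vecI) (simp add: J_def)
  have Jx: "x < nx \<Longrightarrow> J u $ x = ((PXgY P *\<^sub>v p u) $ x - PX P $ x) / \<epsilon>" for u x
    by (simp add: J_def del: index_mult_mat_vec)
  have Ap: "PXgY P *\<^sub>v p u = PX P + \<epsilon> \<cdot>\<^sub>v J u" for u
  proof (rule eq_vecI)
    fix x assume "x < dim_vec (PX P + \<epsilon> \<cdot>\<^sub>v J u)"
    then have x: "x < nx" by simp
    show "(PXgY P *\<^sub>v p u) $ x = (PX P + \<epsilon> \<cdot>\<^sub>v J u) $ x"
      using x eps Jc[of u] by (simp add: Jx del: index_mult_mat_vec)
  qed simp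
  have inS: "p u \<in> S_set P M \<epsilon> (J u)" if u: "u < k" for u
    unfolding S_char[OF Jc] using pc[OF u] pnn[OF u] Ap[of u] by blast
  have P1: "(\<Sum>x<nx. J u $ x) = 0" if u: "u < k" for u
  proof -
    have "(\<Sum>x<nx. J u $ x) = (\<Sum>x<nx. ((PXgY P *\<^sub>v p u) $ x - PX P $ x)) / \<epsilon>"
      by (simp add: Jx sum_divide_distrib del: index_mult_mat_vec PX_idx)
    also have "\<dots> = ((\<Sum>x<nx. (PXgY P *\<^sub>v p u) $ x) - (\<Sum>x<nx. PX P $ x)) / \<epsilon>"
      by (simp only: sum_subtractf)
    also have "\<dots> = 0" using sum_Av[OF pc[OF u]] ps[OF u] sum_PX by simp
    finally show ?thesis .
  qed
  have P2: "(\<Sum>u<k. lam u * J u $ x) = 0" if x: "x < nx" for x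
  proof -
    have e1: "(\<Sum>u<k. lam u * (PXgY P *\<^sub>v p u) $ x) = PX P $ x"
    proof -
      have "(\<Sum>u<k. lam u * (PXgY P *\<^sub>v p u) $ x) = (\<Sum>u<k. lam u * (\<Sum>y<ny. PXgY P $$ (x,y) * p u $ y))"
        by (rule sum.cong) (use pc x in \<open>auto simp: mv_sum[OF A_carr _ x] simp del: index_mult_mat_vec A_idx\<close>)
      also have "\<dots> = (\<Sum>y<ny. PXgY P $$ (x,y) * (\<Sum>u<k. lam u * p u $ y))"
        by (simp add: sum_distrib_left sum.swap[of _ "{..<k}"] mult.left_commute del: A_idx)
      also have "\<dots> = (\<Sum>y<ny. PXgY P $$ (x,y) * PY P $ y)"
        using mix by (simp del: A_idx)
      also have "\<dots> = (PXgY P *\<^sub>v PY P) $ x"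
        by (rule mv_sum[OF A_carr PY_carr x, symmetric])
      finally show ?thesis using A_PY by simp
    qed
    have "(\<Sum>u<k. lam u * J u $ x) = ((\<Sum>u<k. lam u * (PXgY P *\<^sub>v p u) $ x) - (\<Sum>u<k. lam u) * PX P $ x) / \<epsilon>"
    proof -
      have "(\<Sum>u<k. lam u * J u $ x) = (\<Sum>u<k. lam u * (PXgY P *\<^sub>v p u) $ x - lam u * PX P $ x) / \<epsilon>"
        using x by (simp add: Jx sum_divide_distrib right_diff_distrib del: index_mult_mat_vec PX_idx)
      also have "\<dots> = ((\<Sum>u<k. lam u * (PXgY P *\<^sub>v p u) $ x) - (\<Sum>u<k. lam u) * PX P $ x) / \<epsilon>"
        by (simp only: sum_subtractf sum_distrib_right)
      finally show ?thesis .
    qed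
    also have "\<dots> = 0" using e1 sumlam by simp
    finally show ?thesis .
  qed
  have P3: "(\<Sum>x<nx. \<bar>J u $ x\<bar>) \<le> 1" if u: "u < k" for u
  proof -
    have "(\<Sum>x<nx. \<bar>J u $ x\<bar>) = l1norm (PXgY P *\<^sub>v p u - PX P) / \<epsilon>"
      unfolding l1norm_def using eps
      by (simp add: Jx sum_divide_distrib del: index_mult_mat_vec)
    also have "\<dots> \<le> 1" using pl[OF u] eps by simp
    finally show ?thesis .
  qed
  show "H \<in> right_values P M \<epsilon>" unfolding right_values_def dc dr mem_Collect_eq
    apply (rule exI[of _ k], rule exI[of _ lam], rule exI[of _ J], rule exI[of _ p])
    using lam0 sumlam Jc inS mix P1 P2 P3 H by auto
qed

end
theorem theorem1:
  fixes P U S V M :: "real mat" and nx ny :: nat and \<epsilon> :: real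
  assumes "P \<in> carrier_mat nx ny"
    and "nx < ny"
    and "\<forall>x<nx. \<forall>y<ny. P $$ (x, y) \<ge> 0"
    and "(\<Sum>x<nx. \<Sum>y<ny. P $$ (x, y)) = 1"
    and "\<forall>x<nx. PX P $ x > 0"
    and "\<forall>y<ny. PY P $ y > 0"
    and "\<forall>c \<in> carrier_vec nx. transpose_mat (PXgY P) *\<^sub>v c = 0\<^sub>v ny \<longrightarrow> c = 0\<^sub>v nx"
    and "invertible_mat (PXgY1 P)"
    and "is_svd (PXgY P) U S V"
    and "M = mat nx ny (\<lambda>(i, j). V $$ (j, i))"
    and "\<epsilon> > 0"
  shows "\<exists>v. is_min_of (left_values P \<epsilon>) v \<and> is_min_of (right_values P M \<epsilon>) v"
proof -
  interpret setting2 P nx ny \<epsilon> U S V M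
    by unfold_locales (use assms in auto)
  have L: "left_values P \<epsilon> = core_values P \<epsilon>" using left_sub_core core_sub_left by blast
  have R: "right_values P M \<epsilon> = core_values P \<epsilon>" using right_sub_core core_sub_right by blast
  obtain v where "is_min_of (core_values P \<epsilon>) v" using core_min by blast
  then show ?thesis unfolding L R by blast
qed

end
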